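(* Under the standing assumptions below, for all $x\in X$ and all $G\in\partial_B^{sw}S(x)$ it holds that $S(x+z)-S(x)\ge Gz$ $\mu$-a.e. in $\Omega$ for every $z\in X$.
   Context: Standing assumptions: $(\Omega,\Sigma,\mu)$ is a complete measure space with real Lebesgue spaces $L^p(\Omega)$, $p\in[1,\infty]$. $Y$ is a real separable reflexive Banach space with $Y\subset L^q(\Omega)$ and the inclusion $Y\hookrightarrow L^q(\Omega)$ continuous and compact, for a fixed $q\in[1,\infty]$. $X$ is a real separable Banach space. $U$ is a real reflexive Banach space with $U\subset X$ and the inclusion $U\hookrightarrow X$ continuous and compact. The map $S:X\to Y$ satisfies $S(\lambda x_1+(1-\lambda)x_2)\le\lambda S(x_1)+(1-\lambda)S(x_2)$ $\mu$-a.e. in $\Omega$ for all $x_1,x_2\in X$, $\lambda\in[0,1]$; and there is an exponent $r\in[1,\infty]$ such that for every $x\in X$ there are $C,\varepsilon>0$ with $\|S(x_1)-S(x_2)\|_Y\le C\|x_1-x_2\|_X$ for all $x_1,x_2\in X$ with $\|x_i-x\|_X\le\varepsilon$, $i=1,2$, and $\|S(x_1+z)-S(x_1)\|_{L^r(\Omega)}\le C\|z\|_U$ for all $x_1\in X$, $z\in U$ with $\|x_1-x\|_X\le\varepsilon$, $\|z\|_U\le\varepsilon$. $S$ is Gâteaux differentiable at $x\in X$ if for all $z\in X$ the limit $S'(x;z):=\lim_{t\to0^+}(S(x+tz)-S(x))/t$ exists in $Y$ and $z\mapsto S'(x;z)$ is linear and continuous; then $S'(x):=S'(x;\cdot)\in\mathcal{L}(X,Y)$.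 $\mathcal{D}_S$ denotes the set of points where $S$ is Gâteaux differentiable. WOT convergence $G_n\to G$ in $\mathcal{L}(X,Y)$ means $G_nz\rightharpoonup Gz$ weakly in $Y$ for all $z\in X$. The strong-weak Bouligand differential is $\partial_B^{sw}S(x):=\{G\in\mathcal{L}(X,Y): \exists\{x_n\}\subset\mathcal{D}_S \text{ with } x_n\to x \text{ in } X \text{ and } S'(x_n)\to G \text{ in the WOT}\}$. *)

theory Defs
  imports "HOL-Probability.Probability"
begin

text \<open>L^p (semi)norm of a real function on a measure space, for an exponent
 p in [1,infinity] represented as an extended nonnegative real (top = infinity).
 Value top means the function is not in L^p.\<close>
definition Lp_norm :: "'w measure \<Rightarrow> ennreal \<Rightarrow> ('w \<Rightarrow> real) \<Rightarrow> ennreal" where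
  "Lp_norm M p f =
     (if p = top then e2ennreal (esssup M (\<lambda>w. ereal \<bar>f w\<bar>))
      else (let I = (\<integral>\<^sup>+ w. ennreal (\<bar>f w\<bar> powr enn2real p) \<partial>M)
            in if I = top then top else ennreal (enn2real I powr (1 / enn2real p))))"

definition separable_type :: "'a::metric_space itself \<Rightarrow> bool" where
  "separable_type _ \<longleftrightarrow> (\<exists>D::'a set. countable D \<and> closure D = UNIV)"

definition reflexive_type :: "'a::real_normed_vector itself \<Rightarrow> bool" where
  "reflexive_type _ \<longleftrightarrow>
     (\<forall>\<phi> :: ('a \<Rightarrow>\<^sub>L real) \<Rightarrow>\<^sub>L real. \<exists>y::'a. \<forall>f. blinfun_apply \<phi> f = blinfun_apply f y)"

definition weak_conv :: "(nat \<Rightarrow> 'a::real_normed_vector) \<Rightarrow> 'a \<Rightarrow> bool" where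
  "weak_conv ys y \<longleftrightarrow> (\<forall>f :: 'a \<Rightarrow>\<^sub>L real. (\<lambda>n. blinfun_apply f (ys n)) \<longlonglongrightarrow> blinfun_apply f y)"

definition WOT_conv :: "(nat \<Rightarrow> 'x \<Rightarrow> 'y::real_normed_vector) \<Rightarrow> ('x \<Rightarrow> 'y) \<Rightarrow> bool" where
  "WOT_conv Gs G \<longleftrightarrow> (\<forall>z. weak_conv (\<lambda>n. Gs n z) (G z))"

definition gateaux_deriv ::
  "('x::real_normed_vector \<Rightarrow> 'y::real_normed_vector) \<Rightarrow> 'x \<Rightarrow> ('x \<Rightarrow> 'y) \<Rightarrow> bool" where
  "gateaux_deriv S x G \<longleftrightarrow> bounded_linear G \<and>
     (\<forall>z. ((\<lambda>t. (S (x + t *\<^sub>R z) - S x) /\<^sub>R t) \<longlongrightarrow> G z) (at_right 0))"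

definition gateaux_points :: "('x::real_normed_vector \<Rightarrow> 'y::real_normed_vector) \<Rightarrow> 'x set" where
  "gateaux_points S = {x. \<exists>G. gateaux_deriv S x G}"

definition gateaux_derivative ::
  "('x::real_normed_vector \<Rightarrow> 'y::real_normed_vector) \<Rightarrow> 'x \<Rightarrow> 'x \<Rightarrow> 'y" where
  "gateaux_derivative S x = (SOME G. gateaux_deriv S x G)"

definition bouligand_sw ::
  "('x::real_normed_vector \<Rightarrow> 'y::real_normed_vector) \<Rightarrow> 'x \<Rightarrow> ('x \<Rightarrow> 'y) set" where
  "bouligand_sw S x = {G. bounded_linear G \<and>
     (\<exists>xs. (\<forall>n. xs n \<in> gateaux_points S) \<and> xs \<longlonglongrightarrow> x \<and>
           WOT_conv (\<lambda>n. gateaux_derivative S (xs n)) G)}"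

end

theory Submission
  imports Defs
begin


definition ufam :: "'a set set \<Rightarrow> 'a set set \<Rightarrow> bool" where
  "ufam F0 U \<longleftrightarrow> F0 \<subseteq> U \<and> {} \<notin> U \<and> (\<forall>X\<in>U. \<forall>Y\<in>U. X \<inter> Y \<in> U) \<and>
      (\<forall>X\<in>U. \<forall>Y. X \<subseteq> Y \<longrightarrow> Y \<in> U)"

lemma ufam_union_chain:
  assumes "C \<noteq> {}" "\<forall>U\<in>C. ufam F0 U" "\<forall>X\<in>C. \<forall>Y\<in>C. X \<subseteq> Y \<or> Y \<subseteq> X"
  shows "ufam F0 (\<Union>C)"
  unfolding ufam_def
proof (intro conjI ballI allI impI)
  obtain U0 where "U0 \<in> C" using assms(1) by blast
  then have "F0 \<subseteq> U0" using assms(2) unfolding ufam_def by simp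
  then show "F0 \<subseteq> \<Union>C" using \<open>U0 \<in> C\<close> by blast
  show "{} \<notin> \<Union>C" using assms(2) unfolding ufam_def by simp
next
  fix X Y assume "X \<in> \<Union>C" "Y \<in> \<Union>C"
  then obtain U1 U2 where u: "U1 \<in> C" "U2 \<in> C" "X \<in> U1" "Y \<in> U2" by blast
  have i1: "\<forall>X\<in>U1. \<forall>Y\<in>U1. X \<inter> Y \<in> U1" using assms(2) u(1) unfolding ufam_def by simp
  have i2: "\<forall>X\<in>U2. \<forall>Y\<in>U2. X \<inter> Y \<in> U2" using assms(2) u(2) unfolding ufam_def by simp
  from assms(3) u(1,2) have "U1 \<subseteq> U2 \<or> U2 \<subseteq> U1" by simp
  then show "X \<inter> Y \<in> \<Union>C"
  proof
    assume "U1 \<subseteq> U2" then have "X \<inter> Y \<in> U2" using i2 u by blast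
    then show ?thesis using u(2) by blast
  next
    assume "U2 \<subseteq> U1" then have "X \<inter> Y \<in> U1" using i1 u by blast
    then show ?thesis using u(1) by blast
  qed
next
  fix X Y assume "X \<in> \<Union>C" "X \<subseteq> Y"
  then obtain U1 where u: "U1 \<in> C" "X \<in> U1" by blast
  have "\<forall>X\<in>U1. \<forall>Y. X \<subseteq> Y \<longrightarrow> Y \<in> U1" using assms(2) u(1) unfolding ufam_def by simp
  then have "Y \<in> U1" using u \<open>X \<subseteq> Y\<close> by blast
  then show "Y \<in> \<Union>C" using u(1) by blast
qed

lemma ultra_family_exists:
  fixes F0 :: "'a set set"
  assumes ne: "F0 \<noteq> {}" and f0: "ufam F0 F0"
  shows "\<exists>U. ufam F0 U \<and> (\<forall>P. P \<in> U \<or> - P \<in> U)"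
proof -
  define A where "A = {U. ufam F0 U}"
  have "\<forall>C\<in>chains A. \<exists>U\<in>A. \<forall>X\<in>C. X \<subseteq> U"
  proof
    fix C assume C: "C \<in> chains A"
    show "\<exists>U\<in>A. \<forall>X\<in>C. X \<subseteq> U"
    proof (cases "C = {}")
      case True then show ?thesis using f0 unfolding A_def by blast
    next
      case False
      have CA: "\<forall>U\<in>C. ufam F0 U" and ch: "\<forall>X\<in>C. \<forall>Y\<in>C. X \<subseteq> Y \<or> Y \<subseteq> X"
        using C unfolding chains_def chain_subset_def A_def by auto
      have "\<Union>C \<in> A" using ufam_union_chain[OF False CA ch] unfolding A_def by simp
      then show ?thesis by blast
    qed
  qed
  then obtain M where MA: "ufam F0 M" and max: "\<And>X. ufam F0 X \<Longrightarrow> M \<subseteq> X \<Longrightarrow> X = M"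
    using Zorn_Lemma2[of A] unfolding A_def by auto
  have Mint: "\<forall>X\<in>M. \<forall>Y\<in>M. X \<inter> Y \<in> M" and Mup: "\<forall>X\<in>M. \<forall>Y. X \<subseteq> Y \<longrightarrow> Y \<in> M"
    and Me: "{} \<notin> M" and MF: "F0 \<subseteq> M" using MA unfolding ufam_def by auto
  have ultra: "P \<in> M \<or> - P \<in> M" for P
  proof (rule ccontr)
    assume nP: "\<not> (P \<in> M \<or> - P \<in> M)"
    have disj: "X \<inter> P \<noteq> {}" if "X \<in> M" for X
    proof
      assume "X \<inter> P = {}"
      then have "X \<subseteq> - P" by blast
      then have "- P \<in> M" using Mup that by blast
      then show False using nP by blast
    qed
    define M' where "M' = {Y. \<exists>X\<in>M. X \<inter> P \<subseteq> Y}"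
    have "ufam F0 M'" unfolding ufam_def
    proof (intro conjI ballI allI impI)
      show "F0 \<subseteq> M'" using MF unfolding M'_def by blast
      show "{} \<notin> M'" using disj unfolding M'_def by blast
    next
      fix X Y assume "X \<in> M'" "Y \<in> M'"
      then obtain X1 X2 where x: "X1 \<in> M" "X2 \<in> M" "X1 \<inter> P \<subseteq> X" "X2 \<inter> P \<subseteq> Y"
        unfolding M'_def by blast
      have "X1 \<inter> X2 \<in> M" using Mint x(1,2) by blast
      moreover have "(X1 \<inter> X2) \<inter> P \<subseteq> X \<inter> Y" using x(3,4) by blast
      ultimately show "X \<inter> Y \<in> M'" unfolding M'_def by blast
    next
      fix X Y assume "X \<in> M'" "X \<subseteq> Y"
      then show "Y \<in> M'" unfolding M'_def by blast
    qed
    moreover have "M \<subseteq> M'" unfolding M'_def by blast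
    ultimately have "M' = M" using max by blast
    moreover obtain X0 where "X0 \<in> M" using MF ne by blast
    ultimately have "P \<in> M" unfolding M'_def by blast
    then show False using nP by blast
  qed
  show ?thesis using MA ultra by blast
qed

lemma ultrafilter_exists:
  fixes F0 :: "'a set set"
  assumes ne: "F0 \<noteq> {}" and nempty: "{} \<notin> F0"
    and int: "\<And>X Y. X \<in> F0 \<Longrightarrow> Y \<in> F0 \<Longrightarrow> X \<inter> Y \<in> F0"
    and up: "\<And>X Y. X \<in> F0 \<Longrightarrow> X \<subseteq> Y \<Longrightarrow> Y \<in> F0"
  shows "\<exists>F::'a filter. F \<noteq> bot \<and> (\<forall>X\<in>F0. eventually (\<lambda>x. x \<in> X) F) \<and>
     (\<forall>P. eventually P F \<or> eventually (\<lambda>x. \<not> P x) F)"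
proof -
  have "ufam F0 F0" using nempty int up unfolding ufam_def by blast
  then obtain U where U0: "ufam F0 U" and U5: "\<forall>P. P \<in> U \<or> - P \<in> U"
    using ultra_family_exists[OF ne] by blast
  have U: "F0 \<subseteq> U" "{} \<notin> U" "\<forall>X\<in>U. \<forall>Y\<in>U. X \<inter> Y \<in> U"
      "\<forall>X\<in>U. \<forall>Y. X \<subseteq> Y \<longrightarrow> Y \<in> U" "\<forall>P. P \<in> U \<or> - P \<in> U"
    using U0 U5 unfolding ufam_def by auto
  obtain X0 where "X0 \<in> U" using U(1) ne by blast
  have isf: "is_filter (\<lambda>P. {x. P x} \<in> U)"
  proof
    have "X0 \<subseteq> {x. True}" by simp
    then show "{x. True} \<in> U" using U(4) \<open>X0 \<in> U\<close> by simp
  next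
    fix P Q assume pq: "{x. P x} \<in> U" "{x. Q x} \<in> U"
    then have "{x. P x} \<inter> {x. Q x} \<in> U" by (rule U(3)[rule_format])
    then show "{x. P x \<and> Q x} \<in> U" unfolding Collect_conj_eq .
  next
    fix P Q assume pq: "\<forall>x. P x \<longrightarrow> Q x" "{x. P x} \<in> U"
    have "{x. P x} \<subseteq> {x. Q x}" using pq(1) by auto
    with pq(2) show "{x. Q x} \<in> U" by (rule U(4)[rule_format])
  qed
  define F where "F = Abs_filter (\<lambda>P. {x. P x} \<in> U)"
  have ev: "eventually P F \<longleftrightarrow> {x. P x} \<in> U" for P
    unfolding F_def using eventually_Abs_filter[OF isf] by simp
  have "\<not> eventually (\<lambda>_. False) F" using ev[of "\<lambda>_. False"] U(2) by simp
  then have Fb: "F \<noteq> bot" by (simp add: eventually_False)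
  have F0e: "\<forall>X\<in>F0. eventually (\<lambda>x. x \<in> X) F"
  proof
    fix X assume "X \<in> F0"
    then have "X \<in> U" using U(1) by (rule subsetD[rotated])
    then show "eventually (\<lambda>x. x \<in> X) F" using ev[of "\<lambda>x. x \<in> X"] by simp
  qed
  have "\<forall>P. eventually P F \<or> eventually (\<lambda>x. \<not> P x) F"
  proof
    fix P
    have "{x. P x} \<in> U \<or> - {x. P x} \<in> U" using U(5) by blast
    moreover have "- {x. P x} = {x. \<not> P x}" by blast
    ultimately show "eventually P F \<or> eventually (\<lambda>x. \<not> P x) F" using ev[of P] ev[of "\<lambda>x. \<not> P x"]
      by simp
  qed
  then show ?thesis using Fb F0e by (intro exI[of _ F] conjI)
qed

lemma t1: fixes g :: "'a \<Rightarrow> real" assumes bd: "eventually (\<lambda>x. \<bar>g x\<bar> \<le> B) F"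
  shows "eventually (\<lambda>y. y \<in> {-B..B}) (filtermap g F)"
  using bd unfolding eventually_filtermap by (rule eventually_mono) auto

lemma t2: "F \<noteq> bot \<Longrightarrow> filtermap g F \<noteq> bot" by (simp add: filtermap_bot_iff)

lemma t3: "\<forall>F. F \<noteq> bot \<longrightarrow> eventually (\<lambda>x. x \<in> {-B..B}) F \<longrightarrow> (\<exists>x\<in>{-B..B::real}. inf (nhds x) F \<noteq> bot)"
    using compact_filter[of "{-B..B}"] compact_Icc[of "-B" B] by simp

lemma t4: fixes S :: "real set" assumes "open S" "c \<in> S" shows "eventually (\<lambda>y. y \<in> S) (nhds c)"
  using assms eventually_nhds by blast

lemma t5: assumes "eventually (\<lambda>y. y \<notin> S) G" "eventually (\<lambda>y. y \<in> S) H"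
  shows "eventually (\<lambda>_. False) (inf H G)"
  unfolding eventually_inf by (intro exI[of _ "\<lambda>y. y \<in> S"] exI[of _ "\<lambda>y. y \<notin> S"]) (simp add: assms)

lemma ultra_lim_exists:
  fixes F :: "'a filter" and g :: "'a \<Rightarrow> real"
  assumes Fb: "F \<noteq> bot" and ultra: "\<forall>P. eventually P F \<or> eventually (\<lambda>x. \<not> P x) F"
    and bd: "eventually (\<lambda>x. \<bar>g x\<bar> \<le> B) F"
  shows "\<exists>c. (g \<longlongrightarrow> c) F"
proof -
  have "\<exists>x\<in>{-B..B}. inf (nhds x) (filtermap g F) \<noteq> bot"
    using t3[rule_format, OF t2[OF Fb] t1[OF bd]] .
  then obtain c where c: "inf (nhds c) (filtermap g F) \<noteq> bot" by blast
  have "(g \<longlongrightarrow> c) F"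
  proof (rule topological_tendstoI)
    fix S :: "real set" assume S: "open S" "c \<in> S"
    show "eventually (\<lambda>x. g x \<in> S) F"
    proof (rule ccontr)
      assume "\<not> eventually (\<lambda>x. g x \<in> S) F"
      then have "eventually (\<lambda>x. g x \<notin> S) F" using ultra[rule_format, of "\<lambda>x. g x \<in> S"] by simp
      then have "eventually (\<lambda>y. y \<notin> S) (filtermap g F)" by (simp add: eventually_filtermap)
      from t5[OF this t4[OF S]] have "eventually (\<lambda>_. False) (inf (nhds c) (filtermap g F))" .
      then show False using c by (simp add: eventually_False)
    qed
  qed
  then show ?thesis by blast
qed
lemma blinfun_from_bound:
  fixes \<phi> :: "'y::real_normed_vector \<Rightarrow> real"
  assumes add: "\<And>a b. \<phi> (a + b) = \<phi> a + \<phi> b" and sc: "\<And>r a. \<phi> (r *\<^sub>R a) = r * \<phi> a"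
    and bd: "\<And>y. norm y \<le> 1 \<Longrightarrow> \<bar>\<phi> y\<bar> \<le> K"
  shows "bounded_linear \<phi>"
proof (rule bounded_linear_intro[where K=K])
  show "\<phi> (a + b) = \<phi> a + \<phi> b" for a b by (rule add)
  show "\<phi> (r *\<^sub>R a) = r *\<^sub>R \<phi> a" for r a using sc by simp
  show "norm (\<phi> y) \<le> norm y * K" for y
  proof (cases "y = 0")
    case True
    then have "\<phi> y = 0" using sc[of 0 y] by simp
    then show ?thesis using True by simp
  next
    case False
    define u where "u = (1 / norm y) *\<^sub>R y"
    have "norm u \<le> 1" using False by (simp add: u_def)
    have e: "norm y *\<^sub>R u = y" using False by (simp add: u_def)
    have "\<phi> y = norm y * \<phi> u" using sc[of "norm y" u] unfolding e .
    then have "\<bar>\<phi> y\<bar> = norm y * \<bar>\<phi> u\<bar>" by (simp add: abs_mult)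
    also have "\<dots> \<le> norm y * K" using bd[OF \<open>norm u \<le> 1\<close>] by (simp add: mult_left_mono)
    finally show ?thesis by simp
  qed
qed

lemma func_inf:
  fixes M :: "'w measure" and emb :: "'y::real_normed_vector \<Rightarrow> 'w \<Rightarrow> real"
  assumes emb_lin: "\<And>a b y1 y2. AE w in M. emb (a *\<^sub>R y1 + b *\<^sub>R y2) w = a * emb y1 w + b * emb y2 w"
    and bnd: "\<And>y. AE w in M. \<bar>emb y w\<bar> \<le> K * norm y"
    and A: "A \<in> sets M" "A \<notin> null_sets M" "\<And>w. w \<in> A \<Longrightarrow> emb d w < - \<delta>" and \<delta>: "\<delta> > 0"
  shows "\<exists>\<phi>::'y \<Rightarrow>\<^sub>L real. (\<forall>y. (AE w in M. 0 \<le> emb y w) \<longrightarrow> 0 \<le> \<phi> y) \<and> \<phi> d < 0"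
proof -
  define F0 where "F0 = {P. \<exists>N\<in>null_sets M. A - N \<subseteq> P}"
  have F0I: "P \<in> F0" if "N \<in> null_sets M" "A - N \<subseteq> P" for N P
    unfolding F0_def using that by blast
  have F0E: "\<exists>N. N \<in> null_sets M \<and> A - N \<subseteq> P" if "P \<in> F0" for P
    using that unfolding F0_def by blast
  have f1: "F0 \<noteq> {}" using F0I[OF null_sets.empty_sets[of M], of UNIV] by blast
  have f2: "{} \<notin> F0"
  proof
    assume "{} \<in> F0"
    then obtain N where "N \<in> null_sets M" "A - N \<subseteq> {}" using F0E by blast
    then have "A \<subseteq> N" by blast
    then have "A \<in> null_sets M" using null_sets_subset[OF \<open>N \<in> null_sets M\<close> A(1)] by simp
    then show False using A(2) by simp
  qed
  have f3: "\<And>X Y. X \<in> F0 \<Longrightarrow> Y \<in> F0 \<Longrightarrow> X \<inter> Y \<in> F0"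
  proof -
    fix X Y assume xy: "X \<in> F0" "Y \<in> F0"
    obtain N1 where n1: "N1 \<in> null_sets M" "A - N1 \<subseteq> X" using F0E[OF xy(1)] by blast
    obtain N2 where n2: "N2 \<in> null_sets M" "A - N2 \<subseteq> Y" using F0E[OF xy(2)] by blast
    have "N1 \<union> N2 \<in> null_sets M" using null_sets.Un[OF n1(1) n2(1)] .
    moreover have "A - (N1 \<union> N2) \<subseteq> X \<inter> Y" using n1(2) n2(2) by blast
    ultimately show "X \<inter> Y \<in> F0" by (rule F0I)
  qed
  have f4: "\<And>X Y. X \<in> F0 \<Longrightarrow> X \<subseteq> Y \<Longrightarrow> Y \<in> F0"
  proof -
    fix X Y assume xy: "X \<in> F0" "X \<subseteq> Y"
    obtain N1 where n1: "N1 \<in> null_sets M" "A - N1 \<subseteq> X" using F0E[OF xy(1)] by blast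
    have "A - N1 \<subseteq> Y" using n1(2) xy(2) by (rule subset_trans)
    then show "Y \<in> F0" using n1(1) F0I by blast
  qed
  obtain F :: "'w filter" where F: "F \<noteq> bot" "\<forall>X\<in>F0. eventually (\<lambda>x. x \<in> X) F"
     "\<forall>P. eventually P F \<or> eventually (\<lambda>x. \<not> P x) F"
  proof -
    have "\<exists>F::'w filter. F \<noteq> bot \<and> (\<forall>X\<in>F0. eventually (\<lambda>x. x \<in> X) F) \<and>
     (\<forall>P. eventually P F \<or> eventually (\<lambda>x. \<not> P x) F)"
      using f1 f2 f3 f4 by (rule ultrafilter_exists)
    then show ?thesis using that by blast
  qed
  have AE_ev: "eventually P F" if ae: "AE w in M. P w" for P
  proof -
    obtain N where N0: "{w \<in> space M. \<not> P w} \<subseteq> N" "emeasure M N = 0" "N \<in> sets M"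
      using AE_E[OF ae] by blast
    have N: "N \<in> null_sets M" "{w \<in> space M. \<not> P w} \<subseteq> N" using N0 by auto
    have "A \<subseteq> space M" using sets.sets_into_space[OF A(1)] .
    then have "A - N \<subseteq> {w. P w}" using N by blast
    then have "{w. P w} \<in> F0" using N(1) F0I by blast
    then show ?thesis using F(2) by auto
  qed
  have lim: "((emb y) \<longlongrightarrow> Lim F (emb y)) F" for y
  proof -
    have "eventually (\<lambda>w. \<bar>emb y w\<bar> \<le> K * norm y) F" using AE_ev[OF bnd] .
    then obtain c where c: "(emb y \<longlongrightarrow> c) F" using ultra_lim_exists[OF F(1) F(3)] by blast
    have "Lim F (emb y) = c" using tendsto_Lim[OF F(1) c] .
    then show ?thesis using c by simp
  qed
  define \<phi> where "\<phi> y = Lim F (emb y)" for y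
  have lin: "\<phi> (a *\<^sub>R y1 + b *\<^sub>R y2) = a * \<phi> y1 + b * \<phi> y2" for a b y1 y2
  proof -
    have "((\<lambda>w. a * emb y1 w + b * emb y2 w) \<longlongrightarrow> a * \<phi> y1 + b * \<phi> y2) F"
      unfolding \<phi>_def by (intro tendsto_intros lim)
    moreover have ev: "eventually (\<lambda>w. emb (a *\<^sub>R y1 + b *\<^sub>R y2) w = a * emb y1 w + b * emb y2 w) F"
      using AE_ev[OF emb_lin[of a y1 b y2]] .
    ultimately have "(emb (a *\<^sub>R y1 + b *\<^sub>R y2) \<longlongrightarrow> a * \<phi> y1 + b * \<phi> y2) F"
      using tendsto_cong[OF ev] by simp
    then show ?thesis unfolding \<phi>_def using tendsto_Lim[OF F(1)] by blast
  qed
  have bl: "bounded_linear \<phi>"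
  proof (rule blinfun_from_bound[where K="\<bar>K\<bar>"])
    show "\<phi> (a + b) = \<phi> a + \<phi> b" for a b using lin[of 1 a 1 b] by simp
    show "\<phi> (r *\<^sub>R a) = r * \<phi> a" for r a using lin[of r a 0 a] by simp
    show "\<bar>\<phi> y\<bar> \<le> \<bar>K\<bar>" if "norm y \<le> 1" for y
    proof -
      have "((\<lambda>w. \<bar>emb y w\<bar>) \<longlongrightarrow> \<bar>\<phi> y\<bar>) F" unfolding \<phi>_def by (intro tendsto_intros lim)
      moreover have "eventually (\<lambda>w. \<bar>emb y w\<bar> \<le> \<bar>K\<bar>) F"
      proof -
        have "K * norm y \<le> \<bar>K\<bar> * norm y" by (simp add: mult_right_mono)
        also have "\<dots> \<le> \<bar>K\<bar>" using that by (simp add: mult_left_le)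
        finally have "K * norm y \<le> \<bar>K\<bar>" .
        then show ?thesis using AE_ev[OF bnd[of y]] by (auto elim: eventually_mono)
      qed
      ultimately show ?thesis by (rule tendsto_upperbound[OF _ _ F(1)])
    qed
  qed
  have pos: "0 \<le> \<phi> y" if "AE w in M. 0 \<le> emb y w" for y
    using tendsto_lowerbound[OF lim[of y] AE_ev[OF that] F(1)] unfolding \<phi>_def .
  have "A \<in> F0" using F0I[OF null_sets.empty_sets[of M], of A] by simp
  then have "eventually (\<lambda>w. w \<in> A) F" using F(2) by blast
  then have "eventually (\<lambda>w. emb d w \<le> - \<delta>) F" by (rule eventually_mono) (use A(3) in force)
  then have "\<phi> d \<le> - \<delta>" unfolding \<phi>_def by (rule tendsto_upperbound[OF lim[of d] _ F(1)])
  then have neg: "\<phi> d < 0" using \<delta> by simp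
  show ?thesis
    by (rule exI[of _ "Blinfun \<phi>"]) (simp add: bounded_linear_Blinfun_apply[OF bl] pos neg)
qed

lemma abs_le_one_plus_powr:
  fixes e p :: real assumes "1 \<le> p"
  shows "\<bar>e\<bar> \<le> 1 + \<bar>e\<bar> powr p"
proof (cases "\<bar>e\<bar> \<le> 1")
  case True then show ?thesis by (simp add: add_increasing2)
next
  case False
  then have "\<bar>e\<bar> = \<bar>e\<bar> powr 1" by simp
  also have "\<dots> \<le> \<bar>e\<bar> powr p" using False assms by (intro powr_mono) auto
  finally show ?thesis by simp
qed

lemma func_fin:
  fixes M :: "'w measure" and emb :: "'y::real_normed_vector \<Rightarrow> 'w \<Rightarrow> real"
  assumes emb_lin: "\<And>a b y1 y2. AE w in M. emb (a *\<^sub>R y1 + b *\<^sub>R y2) w = a * emb y1 w + b * emb y2 w"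
    and emb_meas: "\<And>y. emb y \<in> borel_measurable M"
    and p: "1 \<le> p" and K: "0 \<le> K"
    and Ibd: "\<And>y. (\<integral>\<^sup>+ w. ennreal (\<bar>emb y w\<bar> powr p) \<partial>M) \<le> ennreal ((K * norm y) powr p)"
    and A: "A \<in> sets M" "emeasure M A < \<infinity>" "A \<notin> null_sets M" "\<And>w. w \<in> A \<Longrightarrow> emb d w < - \<delta>"
    and \<delta>: "\<delta> > 0"
  shows "\<exists>\<phi>::'y \<Rightarrow>\<^sub>L real. (\<forall>y. (AE w in M. 0 \<le> emb y w) \<longrightarrow> 0 \<le> \<phi> y) \<and> \<phi> d < 0"
proof -
  define g where "g y w = indicator A w * emb y w" for y w
  have gm: "g y \<in> borel_measurable M" for y
    unfolding g_def by (intro borel_measurable_times borel_measurable_indicator emb_meas A(1))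
  have mA: "emeasure M A = ennreal (measure M A)" using A(2) by (intro emeasure_eq_ennreal_measure) simp
  have nnb: "(\<integral>\<^sup>+ w. ennreal (norm (g y w)) \<partial>M) \<le> ennreal (measure M A + (K * norm y) powr p)" for y
  proof -
    have "(\<integral>\<^sup>+ w. ennreal (norm (g y w)) \<partial>M) \<le>
        (\<integral>\<^sup>+ w. ennreal (indicator A w) + ennreal (\<bar>emb y w\<bar> powr p) \<partial>M)"
    proof (rule nn_integral_mono)
      fix w
      have "norm (g y w) \<le> indicator A w + \<bar>emb y w\<bar> powr p"
        using abs_le_one_plus_powr[OF p, of "emb y w"]
        by (auto simp: g_def indicator_def)
      then show "ennreal (norm (g y w)) \<le> ennreal (indicator A w) + ennreal (\<bar>emb y w\<bar> powr p)"
        by (simp add: ennreal_plus[symmetric] del: ennreal_plus)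
    qed
    also have "\<dots> = (\<integral>\<^sup>+ w. ennreal (indicator A w) \<partial>M) + (\<integral>\<^sup>+ w. ennreal (\<bar>emb y w\<bar> powr p) \<partial>M)"
    proof (rule nn_integral_add)
      show "(\<lambda>w. ennreal (indicator A w)) \<in> borel_measurable M"
        by (intro measurable_compose[OF borel_measurable_indicator[OF A(1)]] measurable_ennreal)
      show "(\<lambda>w. ennreal (\<bar>emb y w\<bar> powr p)) \<in> borel_measurable M"
        by (intro measurable_compose[OF _ measurable_ennreal] measurable_abs_powr emb_meas)
    qed
    also have "(\<integral>\<^sup>+ w. ennreal (indicator A w) \<partial>M) = emeasure M A"
      unfolding ennreal_indicator using A(1) by (rule nn_integral_indicator)
    also have "emeasure M A + (\<integral>\<^sup>+ w. ennreal (\<bar>emb y w\<bar> powr p) \<partial>M) \<le>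
       ennreal (measure M A) + ennreal ((K * norm y) powr p)"
      using Ibd[of y] mA by (intro add_mono) auto
    also have "\<dots> = ennreal (measure M A + (K * norm y) powr p)"
      by (simp add: ennreal_plus[symmetric] del: ennreal_plus)
    finally show ?thesis .
  qed
  have gi: "integrable M (g y)" for y
  proof (rule integrableI_bounded[OF gm])
    have "ennreal (measure M A + (K * norm y) powr p) < \<infinity>" by simp
    then show "(\<integral>\<^sup>+ w. ennreal (norm (g y w)) \<partial>M) < \<infinity>" using nnb[of y] by (rule le_less_trans[rotated])
  qed
  define \<phi> where "\<phi> y = integral\<^sup>L M (g y)" for y
  have lin: "\<phi> (a *\<^sub>R y1 + b *\<^sub>R y2) = a * \<phi> y1 + b * \<phi> y2" for a b y1 y2
  proof -
    have "\<phi> (a *\<^sub>R y1 + b *\<^sub>R y2) = integral\<^sup>L M (\<lambda>w. a * g y1 w + b * g y2 w)"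
      unfolding \<phi>_def
    proof (rule integral_cong_AE)
      show "g (a *\<^sub>R y1 + b *\<^sub>R y2) \<in> borel_measurable M" by (rule gm)
      show "(\<lambda>w. a * g y1 w + b * g y2 w) \<in> borel_measurable M"
        by (intro borel_measurable_add borel_measurable_times borel_measurable_const gm)
      show "AE w in M. g (a *\<^sub>R y1 + b *\<^sub>R y2) w = a * g y1 w + b * g y2 w"
        using emb_lin[of a y1 b y2] by (rule AE_mp) (auto simp: g_def algebra_simps)
    qed
    also have "\<dots> = a * \<phi> y1 + b * \<phi> y2"
      unfolding \<phi>_def using gi[of y1] gi[of y2] by simp
    finally show ?thesis .
  qed
  have bl: "bounded_linear \<phi>"
  proof (rule blinfun_from_bound[where K="measure M A + K powr p"])
    show "\<phi> (a + b) = \<phi> a + \<phi> b" for a b using lin[of 1 a 1 b] by simp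
    show "\<phi> (r *\<^sub>R a) = r * \<phi> a" for r a using lin[of r a 0 a] by simp
    show "\<bar>\<phi> y\<bar> \<le> measure M A + K powr p" if "norm y \<le> 1" for y
    proof -
      have "ennreal \<bar>\<phi> y\<bar> \<le> (\<integral>\<^sup>+ w. ennreal (norm (g y w)) \<partial>M)"
        using integral_norm_bound_ennreal[OF gi[of y]] unfolding \<phi>_def by simp
      also have "\<dots> \<le> ennreal (measure M A + (K * norm y) powr p)" by (rule nnb)
      also have "\<dots> \<le> ennreal (measure M A + K powr p)"
      proof (intro ennreal_leI add_left_mono powr_mono2)
        show "0 \<le> K * norm y" using K by simp
        show "K * norm y \<le> K" using K that by (simp add: mult_left_le)
      qed (use p in auto)
      finally show ?thesis
        by (subst (asm) ennreal_le_iff) (auto intro: add_nonneg_nonneg)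
    qed
  qed
  have pos: "0 \<le> \<phi> y" if ae: "AE w in M. 0 \<le> emb y w" for y
    unfolding \<phi>_def by (rule integral_nonneg_AE) (use ae in \<open>auto simp: g_def indicator_def elim: AE_mp\<close>)
  have "\<phi> d \<le> integral\<^sup>L M (\<lambda>w. (- \<delta>) * indicator A w)"
    unfolding \<phi>_def
  proof (rule integral_mono[OF gi])
    show "integrable M (\<lambda>w. (- \<delta>) * indicator A w)"
      using A(1,2) by (intro integrable_mult_right integrable_real_indicator) auto
    show "g d w \<le> - \<delta> * indicator A w" for w
      using A(4)[of w] by (auto simp: g_def indicator_def)
  qed
  also have "\<dots> = - \<delta> * measure M A"
    using A(1) sets.sets_into_space[OF A(1)] by (simp add: Int_absorb2)
  also have "\<dots> < 0"
  proof -
    have "emeasure M A \<noteq> 0" using A(1,3) by auto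
    then have "measure M A \<noteq> 0" using mA by auto
    then have "measure M A > 0" using measure_nonneg[of M A] by linarith
    then show ?thesis using \<delta> by simp
  qed
  finally have neg: "\<phi> d < 0" .
  show ?thesis
    by (rule exI[of _ "Blinfun \<phi>"]) (simp add: bounded_linear_Blinfun_apply[OF bl] pos neg)
qed



lemma Lp_top_bound:
  fixes f :: "'w \<Rightarrow> real"
  assumes "Lp_norm M top f \<le> ennreal c"
  shows "AE w in M. \<bar>f w\<bar> \<le> max 0 c"
proof -
  define e where "e = esssup M (\<lambda>w. ereal \<bar>f w\<bar>)"
  have h: "e2ennreal e \<le> ennreal c" using assms by (simp add: Lp_norm_def e_def)
  have z0: "(0::ereal) \<le> ereal (max 0 c)" by (rule iffD2[OF ereal_less_eq(5)]) simp
  have le: "e \<le> ereal (max 0 c)"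
  proof (cases "e \<le> 0")
    case True
    have "(0::ereal) \<le> ereal (max 0 c)" by (rule iffD2[OF ereal_less_eq(5)]) simp
    with True show ?thesis by (rule order_trans)
  next
    case False
    then have e0: "0 \<le> e" by simp
    show ?thesis
    proof (cases "0 \<le> c")
      case True
      have "e = enn2ereal (e2ennreal e)" using enn2ereal_e2ennreal[OF e0] by simp
      also have "\<dots> \<le> enn2ereal (ennreal c)" using h by (simp add: less_eq_ennreal.rep_eq)
      also have "\<dots> = ereal c" using True by simp
      finally show ?thesis using True by simp
    next
      case False
      then have "e2ennreal e = 0" using h ennreal_neg[of c] by simp
      moreover have "enn2ereal (0::ennreal) = 0" using enn2ereal_ennreal[of 0] by simp
      ultimately have "enn2ereal (e2ennreal e) = 0" by simp
      then have "e = 0" using enn2ereal_e2ennreal[OF e0] by simp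
      then show ?thesis using z0 by simp
    qed
  qed
  have "AE w in M. ereal \<bar>f w\<bar> \<le> e" unfolding e_def by (rule esssup_AE)
  then show ?thesis
  proof eventually_elim
    case (elim w)
    have "ereal \<bar>f w\<bar> \<le> ereal (max 0 c)" using elim le by (rule order_trans)
    then show ?case by (rule iffD1[OF ereal_less_eq(3)])
  qed
qed

lemma Lp_fin_bound:
  fixes f :: "'w \<Rightarrow> real"
  assumes q: "q \<noteq> top" and q1: "1 \<le> q" and le: "Lp_norm M q f \<le> ennreal c" and fin: "Lp_norm M q f < top"
  shows "(\<integral>\<^sup>+ w. ennreal (\<bar>f w\<bar> powr enn2real q) \<partial>M) \<le> ennreal ((max 0 c) powr enn2real q)"
proof -
  define p where "p = enn2real q"
  define I where "I = (\<integral>\<^sup>+ w. ennreal (\<bar>f w\<bar> powr p) \<partial>M)"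
  have LI: "Lp_norm M q f = (if I = top then top else ennreal (enn2real I powr (1 / p)))"
    using q by (simp add: Lp_norm_def I_def p_def Let_def)
  have It: "I \<noteq> top" using fin LI by (auto split: if_splits)
  define r where "r = enn2real I"
  have r0: "0 \<le> r" unfolding r_def by simp
  have Ir: "I = ennreal r" unfolding r_def using It by (simp add: less_top)
  have "ennreal (r powr (1 / p)) \<le> ennreal c" using le LI It by (simp add: r_def)
  also have "\<dots> \<le> ennreal (max 0 c)" by (rule ennreal_leI) simp
  finally have rp: "r powr (1 / p) \<le> max 0 c" by (subst (asm) ennreal_le_iff) auto
  have p0: "0 \<le> p" unfolding p_def by simp
  have "r \<le> (max 0 c) powr p"
  proof (cases "p = 0")
    case True
    have "enn2real 1 \<le> enn2real q" using q1 q by (intro enn2real_mono) (auto simp: less_top)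
    then have "1 \<le> p" unfolding p_def by simp
    then show ?thesis using True by simp
  next
    case False
    have "r = (r powr (1 / p)) powr p" using False r0 by (simp add: powr_powr powr_one)
    also have "\<dots> \<le> (max 0 c) powr p" by (rule powr_mono2[OF p0 _ rp]) simp
    finally show ?thesis .
  qed
  then show ?thesis unfolding I_def[symmetric] p_def[symmetric] Ir by (rule ennreal_leI)
qed

theorem mainTheorem4:
  fixes M :: "'w measure"
    and q r :: ennreal
    and emb :: "'y::banach \<Rightarrow> 'w \<Rightarrow> real"
    and j :: "'u::banach \<Rightarrow> 'x::banach"
    and S :: "'x \<Rightarrow> 'y"
  assumes M_complete: "complete_measure M"
    and q_ge: "1 \<le> q"
    and r_ge: "1 \<le> r"
    and Y_sep: "separable_type TYPE('y)"
    and Y_refl: "reflexive_type TYPE('y)"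
    and emb_meas: "\<And>y. emb y \<in> borel_measurable M"
    and emb_Lq: "\<And>y. Lp_norm M q (emb y) < top"
    and emb_lin: "\<And>a b y1 y2. AE w in M. emb (a *\<^sub>R y1 + b *\<^sub>R y2) w = a * emb y1 w + b * emb y2 w"
    and emb_inj: "\<And>y. (AE w in M. emb y w = 0) \<Longrightarrow> y = 0"
    and emb_cont: "\<exists>C. \<forall>y. Lp_norm M q (emb y) \<le> ennreal (C * norm y)"
    and emb_compact: "\<And>ys :: nat \<Rightarrow> 'y. bounded (range ys) \<Longrightarrow>
           \<exists>sub f. strict_mono sub \<and> f \<in> borel_measurable M \<and> Lp_norm M q f < top \<and>
             (\<lambda>n. Lp_norm M q (\<lambda>w. emb (ys (sub n)) w - f w)) \<longlonglongrightarrow> 0"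
    and X_sep: "separable_type TYPE('x)"
    and U_refl: "reflexive_type TYPE('u)"
    and j_lin: "bounded_linear j"
    and j_inj: "inj j"
    and j_compact: "compact (closure (j ` cball 0 1))"
    and S_convex: "\<And>x1 x2 l. 0 \<le> l \<Longrightarrow> l \<le> 1 \<Longrightarrow>
           AE w in M. emb (S (l *\<^sub>R x1 + (1 - l) *\<^sub>R x2)) w \<le> l * emb (S x1) w + (1 - l) * emb (S x2) w"
    and S_lip: "\<And>x. \<exists>C>0. \<exists>\<epsilon>>0.
           (\<forall>x1 x2. norm (x1 - x) \<le> \<epsilon> \<longrightarrow> norm (x2 - x) \<le> \<epsilon> \<longrightarrow>
               norm (S x1 - S x2) \<le> C * norm (x1 - x2)) \<and>
           (\<forall>x1 z. norm (x1 - x) \<le> \<epsilon> \<longrightarrow> norm z \<le> \<epsilon> \<longrightarrow>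
               Lp_norm M r (\<lambda>w. emb (S (x1 + j z)) w - emb (S x1) w) \<le> ennreal (C * norm z))"
    and G_mem: "G \<in> bouligand_sw S x"
  shows "\<forall>z. AE w in M. emb (S (x + z)) w - emb (S x) w \<ge> emb (G z) w"
  
proof -
  have contS: "isCont S x0" for x0
  proof -
    obtain C \<epsilon> where C: "C > 0" "\<epsilon> > 0" and L: "\<forall>x1 x2. norm (x1 - x0) \<le> \<epsilon> \<longrightarrow> norm (x2 - x0) \<le> \<epsilon> \<longrightarrow>
               norm (S x1 - S x2) \<le> C * norm (x1 - x2)"
      using S_lip[of x0] by blast
    show ?thesis unfolding isCont_def LIM_eq
    proof (intro allI impI)
      fix r :: real assume r: "r > 0"
      show "\<exists>s>0. \<forall>x1. x1 \<noteq> x0 \<and> norm (x1 - x0) < s \<longrightarrow> norm (S x1 - S x0) < r"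
      proof (intro exI[of _ "min \<epsilon> (r / C)"] conjI allI impI)
        show "0 < min \<epsilon> (r / C)" using C r by simp
        fix x1 assume x1: "x1 \<noteq> x0 \<and> norm (x1 - x0) < min \<epsilon> (r / C)"
        have "norm (S x1 - S x0) \<le> C * norm (x1 - x0)" using L x1 C by simp
        also have "\<dots> < C * (r / C)" using x1 C by (intro mult_strict_left_mono) auto
        also have "\<dots> = r" using C by simp
        finally show "norm (S x1 - S x0) < r" .
      qed
    qed
  qed
  have embdiff: "AE w in M. emb (y1 - y2) w = emb y1 w - emb y2 w" for y1 y2
    using emb_lin[of 1 y1 "-1" y2] by simp
  have embsc: "AE w in M. emb (c *\<^sub>R y) w = c * emb y w" for c y
    using emb_lin[of c y 0 y] by simp
  obtain C0 where C0: "\<forall>y. Lp_norm M q (emb y) \<le> ennreal (C0 * norm y)" using emb_cont by blast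
  have maxle: "max 0 (C0 * norm y) \<le> \<bar>C0\<bar> * norm y" for y :: 'y
  proof -
    have "C0 * norm y \<le> \<bar>C0\<bar> * norm y" by (intro mult_right_mono) auto
    then show ?thesis by simp
  qed
  have FUNC: "\<exists>\<phi>::'y \<Rightarrow>\<^sub>L real. (\<forall>y. (AE w in M. 0 \<le> emb y w) \<longrightarrow> 0 \<le> \<phi> y) \<and> \<phi> d < 0"
    if nAE: "\<not> (AE w in M. 0 \<le> emb d w)" for d
  proof -
    define E where "E k = emb d -` {..< - inverse (real (Suc k))} \<inter> space M" for k
    have Es: "E k \<in> sets M" for k
      unfolding E_def by (rule measurable_sets[OF emb_meas]) (intro borel_open open_lessThan)
    have "\<exists>k. E k \<notin> null_sets M"
    proof (rule ccontr)
      assume "\<not> (\<exists>k. E k \<notin> null_sets M)"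
      then have "\<forall>k. E k \<in> null_sets M" by blast
      then have "(\<Union>k. E k) \<in> null_sets M" by (intro null_sets_UN) auto
      moreover have "{w \<in> space M. \<not> 0 \<le> emb d w} \<subseteq> (\<Union>k. E k)"
      proof
        fix w assume "w \<in> {w \<in> space M. \<not> 0 \<le> emb d w}"
        then have w: "w \<in> space M" "emb d w < 0" by auto
        obtain n where n: "n > 0" "inverse (real n) < - emb d w"
          using ex_inverse_of_nat_less[of "- emb d w"] w by auto
        then have "Suc (n - 1) = n" by simp
        then have "inverse (real (Suc (n - 1))) < - emb d w" using n by simp
        then have "w \<in> E (n - 1)" using w unfolding E_def by simp
        then show "w \<in> (\<Union>k. E k)" by blast
      qed
      ultimately have "AE w in M. 0 \<le> emb d w" by (rule AE_I')
      with nAE show False by blast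
    qed
    then obtain k where k: "E k \<notin> null_sets M" by blast
    define \<delta> where "\<delta> = inverse (real (Suc k))"
    have \<delta>: "\<delta> > 0" unfolding \<delta>_def by simp
    have Ed: "emb d w < - \<delta>" if "w \<in> E k" for w using that unfolding E_def \<delta>_def by simp
    show ?thesis
    proof (cases "q = top")
      case True
      have bnd: "AE w in M. \<bar>emb y w\<bar> \<le> \<bar>C0\<bar> * norm y" for y
      proof -
        have "AE w in M. \<bar>emb y w\<bar> \<le> max 0 (C0 * norm y)"
          using Lp_top_bound[of M "emb y" "C0 * norm y"] C0 True by simp
        then show ?thesis
        proof eventually_elim
          case (elim w) then show ?case using maxle[of y] by (rule order_trans)
        qed
      qed
      show ?thesis by (rule func_inf[OF emb_lin bnd Es k Ed \<delta>])
    next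
      case False
      define p where "p = enn2real q"
      have "enn2real 1 \<le> enn2real q" using q_ge False by (intro enn2real_mono) (auto simp: less_top)
      then have p1: "1 \<le> p" unfolding p_def by simp
      have Ibd: "(\<integral>\<^sup>+ w. ennreal (\<bar>emb y w\<bar> powr p) \<partial>M) \<le> ennreal ((\<bar>C0\<bar> * norm y) powr p)" for y
      proof -
        have "(\<integral>\<^sup>+ w. ennreal (\<bar>emb y w\<bar> powr p) \<partial>M) \<le> ennreal ((max 0 (C0 * norm y)) powr p)"
          using Lp_fin_bound[OF False q_ge C0[rule_format, of y] emb_Lq[of y]] unfolding p_def .
        also have "\<dots> \<le> ennreal ((\<bar>C0\<bar> * norm y) powr p)"
          by (intro ennreal_leI powr_mono2 maxle) (use p1 in auto)
        finally show ?thesis .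
      qed
      have finE: "emeasure M (E k) < \<infinity>"
      proof -
        have "ennreal (\<delta> powr p) * emeasure M (E k) = (\<integral>\<^sup>+ w. ennreal (\<delta> powr p) * indicator (E k) w \<partial>M)"
          by (rule nn_integral_cmult_indicator[OF Es, symmetric])
        also have "\<dots> \<le> (\<integral>\<^sup>+ w. ennreal (\<bar>emb d w\<bar> powr p) \<partial>M)"
        proof (rule nn_integral_mono)
          fix w show "ennreal (\<delta> powr p) * indicator (E k) w \<le> ennreal (\<bar>emb d w\<bar> powr p)"
          proof (cases "w \<in> E k")
            case True
            then have "\<delta> \<le> \<bar>emb d w\<bar>" using Ed[OF True] by simp
            then have "\<delta> powr p \<le> \<bar>emb d w\<bar> powr p" using \<delta> p1 by (intro powr_mono2) auto
            then show ?thesis using True by simp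
          qed simp
        qed
        also have "\<dots> \<le> ennreal ((\<bar>C0\<bar> * norm d) powr p)" by (rule Ibd)
        also have "\<dots> < \<infinity>" by simp
        finally have lt: "ennreal (\<delta> powr p) * emeasure M (E k) < \<infinity>" .
        have "ennreal (\<delta> powr p) \<noteq> 0" using \<delta> by simp
        then show ?thesis using lt by (auto simp: ennreal_mult_less_top)
      qed
      show ?thesis by (rule func_fin[OF emb_lin emb_meas p1 _ Ibd Es finE k Ed \<delta>]) simp
    qed
  qed
  have KEY: "AE w in M. 0 \<le> emb d w"
    if wc: "weak_conv ds d" and pos: "\<forall>n. AE w in M. 0 \<le> emb (ds n) w" for ds d
  proof (rule ccontr)
    assume "\<not> (AE w in M. 0 \<le> emb d w)"
    from FUNC[OF this] obtain \<phi> :: "'y \<Rightarrow>\<^sub>L real"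
      where \<phi>: "\<forall>y. (AE w in M. 0 \<le> emb y w) \<longrightarrow> 0 \<le> \<phi> y" "\<phi> d < 0" by blast
    have "(\<lambda>n. \<phi> (ds n)) \<longlonglongrightarrow> \<phi> d" using wc unfolding weak_conv_def by blast
    moreover have "\<forall>n. 0 \<le> \<phi> (ds n)" using \<phi>(1) pos by blast
    ultimately have "0 \<le> \<phi> d" by (intro LIMSEQ_le_const) auto
    with \<phi>(2) show False by simp
  qed
  have sw: "weak_conv ys y" if ysl: "ys \<longlonglongrightarrow> y" for ys and y :: 'y
    unfolding weak_conv_def by (intro allI blinfun.tendsto tendsto_const ysl)
  from G_mem obtain xs where xsD: "\<forall>n. xs n \<in> gateaux_points S" and xs: "xs \<longlonglongrightarrow> x"
    and wot: "WOT_conv (\<lambda>n. gateaux_derivative S (xs n)) G"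
    unfolding bouligand_sw_def by blast
  define Gn where "Gn n = gateaux_derivative S (xs n)" for n
  have gd: "gateaux_deriv S (xs n) (Gn n)" for n
  proof -
    have "\<exists>G. gateaux_deriv S (xs n) G" using xsD unfolding gateaux_points_def by blast
    then show ?thesis unfolding Gn_def gateaux_derivative_def by (rule someI_ex)
  qed
  show ?thesis
  proof
    fix z
    have stepn: "AE w in M. 0 \<le> emb (S (xs n + z) - S (xs n) - Gn n z) w" for n
    proof -
      define t where "t k = inverse (real (Suc k))" for k
      define D where "D k = (S (xs n + t k *\<^sub>R z) - S (xs n)) /\<^sub>R t k" for k
      have tl: "filterlim t (at_right 0) sequentially"
        unfolding t_def by (rule tendsto_imp_filterlim_at_right[OF LIMSEQ_inverse_real_of_nat]) simp
      have "((\<lambda>s. (S (xs n + s *\<^sub>R z) - S (xs n)) /\<^sub>R s) \<longlongrightarrow> Gn n z) (at_right 0)"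
        using gd[of n] unfolding gateaux_deriv_def by blast
      then have DL: "D \<longlonglongrightarrow> Gn n z" unfolding D_def by (rule filterlim_compose[OF _ tl])
      have wc: "weak_conv (\<lambda>k. (S (xs n + z) - S (xs n)) - D k) ((S (xs n + z) - S (xs n)) - Gn n z)"
        by (rule sw) (intro tendsto_diff tendsto_const DL)
      have posk: "AE w in M. 0 \<le> emb ((S (xs n + z) - S (xs n)) - D k) w" for k
      proof -
        have t0: "0 < t k" "t k \<le> 1" unfolding t_def by (auto simp: field_simps)
        have eq: "t k *\<^sub>R (xs n + z) + (1 - t k) *\<^sub>R xs n = xs n + t k *\<^sub>R z"
          by (simp add: algebra_simps)
        have conv: "AE w in M. emb (S (xs n + t k *\<^sub>R z)) w \<le> t k * emb (S (xs n + z)) w + (1 - t k) * emb (S (xs n)) w"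
          using S_convex[OF less_imp_le[OF t0(1)] t0(2), of "xs n + z" "xs n"] unfolding eq .
        have e1: "AE w in M. emb ((S (xs n + z) - S (xs n)) - D k) w = emb (S (xs n + z) - S (xs n)) w - emb (D k) w"
          by (rule embdiff)
        have e2: "AE w in M. emb (D k) w = inverse (t k) * emb (S (xs n + t k *\<^sub>R z) - S (xs n)) w"
          unfolding D_def by (rule embsc)
        have e3: "AE w in M. emb (S (xs n + t k *\<^sub>R z) - S (xs n)) w = emb (S (xs n + t k *\<^sub>R z)) w - emb (S (xs n)) w"
          by (rule embdiff)
        have e4: "AE w in M. emb (S (xs n + z) - S (xs n)) w = emb (S (xs n + z)) w - emb (S (xs n)) w"
          by (rule embdiff)
        from conv e1 e2 e3 e4 show ?thesis
        proof eventually_elim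
          case (elim w)
          define a where "a = emb (S (xs n + z)) w"
          define b where "b = emb (S (xs n)) w"
          define c where "c = emb (S (xs n + t k *\<^sub>R z)) w"
          have h: "c - b \<le> t k * (a - b)" using elim(1) unfolding a_def b_def c_def by (simp add: algebra_simps)
          have "inverse (t k) * (c - b) \<le> inverse (t k) * (t k * (a - b))"
            using h t0 by (intro mult_left_mono) auto
          also have "\<dots> = a - b" using t0 by simp
          finally have "inverse (t k) * (c - b) \<le> a - b" .
          then show ?case using elim(2-5) unfolding a_def b_def c_def by simp
        qed
      qed
      have "\<forall>k. AE w in M. 0 \<le> emb ((S (xs n + z) - S (xs n)) - D k) w" using posk by blast
      from KEY[OF wc this] show ?thesis .
    qed
    have strong: "(\<lambda>n. S (xs n + z) - S (xs n)) \<longlonglongrightarrow> S (x + z) - S x"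
      by (intro tendsto_diff isCont_tendsto_compose[OF contS] tendsto_add xs tendsto_const)
    have wc: "weak_conv (\<lambda>n. S (xs n + z) - S (xs n) - Gn n z) (S (x + z) - S x - G z)"
      unfolding weak_conv_def
    proof
      fix f :: "'y \<Rightarrow>\<^sub>L real"
      have "(\<lambda>n. f (S (xs n + z) - S (xs n))) \<longlonglongrightarrow> f (S (x + z) - S x)"
        using sw[OF strong] unfolding weak_conv_def by blast
      moreover have "(\<lambda>n. f (Gn n z)) \<longlonglongrightarrow> f (G z)"
        using wot unfolding WOT_conv_def weak_conv_def Gn_def by blast
      ultimately have "(\<lambda>n. f (S (xs n + z) - S (xs n)) - f (Gn n z)) \<longlonglongrightarrow> f (S (x + z) - S x) - f (G z)"
        by (rule tendsto_diff)
      then show "(\<lambda>n. f (S (xs n + z) - S (xs n) - Gn n z)) \<longlonglongrightarrow> f (S (x + z) - S x - G z)"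
        by (simp add: blinfun.diff_right)
    qed
    have "AE w in M. 0 \<le> emb (S (x + z) - S x - G z) w" using KEY[OF wc] stepn by blast
    moreover have "AE w in M. emb (S (x + z) - S x - G z) w = emb (S (x + z) - S x) w - emb (G z) w"
      by (rule embdiff)
    moreover have "AE w in M. emb (S (x + z) - S x) w = emb (S (x + z)) w - emb (S x) w"
      by (rule embdiff)
    ultimately show "AE w in M. emb (S (x + z)) w - emb (S x) w \<ge> emb (G z) w"
      by eventually_elim simp
  qed
qed

end
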